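(* Let $\mathcal{X}=\{x_1,\dots,x_n\}$, $\mathcal{X}_{\mathrm{in}}\subseteq\mathcal{X}$ with $n_{\mathrm{in}}$ points, and $1\le n_{\mathrm{out}}\le n_{\mathrm{in}}$. For any SPSD $K\in\mathbb{R}^{n\times n}$, uniform subsampling without replacement (returning a uniformly random size-$n_{\mathrm{out}}$ subset of $\mathcal{X}_{\mathrm{in}}$) is a $(K,\nu,0)$-sub-Gaussian thinning algorithm with $\nu=\sqrt{\|K\|_{\max}}/\sqrt{n_{\mathrm{out}}}$.
   Context: $\|K\|_{\max}$ is the largest absolute entry of $K$. $p_{\mathrm{in},i}=\mathbf{1}\{x_i\in\mathcal{X}_{\mathrm{in}}\}/n_{\mathrm{in}}$, $q_{\mathrm{out},i}=\mathbf{1}\{x_i\in\mathcal{X}_{\mathrm{out}}\}/n_{\mathrm{out}}$. A thinning algorithm is $(K,\nu,\delta)$-sub-Gaussian if $K$ is SPSD, $\nu>0$, $\delta\in[0,1)$ and there is an event $\mathcal{E}$ with $\mathbb{P}(\mathcal{E})\ge1-\delta/2$ such that $\mathbb{E}[\exp(\langle u,K(p_{\mathrm{in}}-q_{\mathrm{out}})\rangle)\mathbf{1}_{\mathcal{E}}]\le\exp(\frac{\nu^2}{2}u^\top Ku)$ for all $u\in\mathbb{R}^n$. *)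

theory Defs
  imports "HOL-Analysis.Analysis" "HOL-Probability.Probability"
begin

text \<open>Points x_1..x_n are identified with the elements of a finite index type 'n
  (so n = CARD('n)); vectors in R^n are real^'n, n x n matrices are real^'n^'n.\<close>

definition spsd :: "real^'n^'n \<Rightarrow> bool" where
  "spsd K \<longleftrightarrow> transpose K = K \<and> (\<forall>x::real^'n. 0 \<le> x \<bullet> (K *v x))"

definition max_norm :: "real^'n^'n \<Rightarrow> real" where
  "max_norm K = Max {\<bar>K $ i $ j\<bar> | i j. True}"

definition ind_vec :: "'n set \<Rightarrow> nat \<Rightarrow> real^'n" where
  "ind_vec A m = (\<chi> i. if i \<in> A then 1 / real m else 0)"

text \<open>A (randomised) thinning algorithm on input X_in with output size n_out is
  given by its output distribution, a pmf over subsets of the index set.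
  (K, nu, delta)-sub-Gaussian, as in the paper.\<close>
definition sub_gaussian_thinning ::
  "real^'n^'n \<Rightarrow> real \<Rightarrow> real \<Rightarrow> 'n set \<Rightarrow> nat \<Rightarrow> 'n set pmf \<Rightarrow> bool" where
  "sub_gaussian_thinning K \<nu> \<delta> Xin nout alg \<longleftrightarrow>
     spsd K \<and> \<nu> > 0 \<and> 0 \<le> \<delta> \<and> \<delta> < 1 \<and>
     (\<exists>E. measure_pmf.prob alg E \<ge> 1 - \<delta> / 2 \<and>
        (\<forall>u::real^'n.
           measure_pmf.expectation alg
             (\<lambda>S. exp (u \<bullet> (K *v (ind_vec Xin (card Xin) - ind_vec S nout))) * indicator E S)
           \<le> exp (\<nu>\<^sup>2 / 2 * (u \<bullet> (K *v u)))))"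

definition uniform_subsampling :: "'n set \<Rightarrow> nat \<Rightarrow> 'n set pmf" where
  "uniform_subsampling Xin nout = pmf_of_set {S. S \<subseteq> Xin \<and> card S = nout}"

end

theory Submission
  imports Defs
begin


lemma hoeff_pos:
  fixes x :: "'a \<Rightarrow> real"
  assumes fin: "finite A" and ne: "A \<noteq> {}" and bnd: "\<And>i. i \<in> A \<Longrightarrow> a \<le> x i \<and> x i \<le> b"
    and l: "l > 0"
  shows "(\<Sum>i\<in>A. exp (l * (x i - (\<Sum>j\<in>A. x j) / card A))) / card A \<le> exp (l\<^sup>2 * (b - a)\<^sup>2 / 8)"
proof -
  let ?M = "measure_pmf (pmf_of_set A)"
  interpret interval_bounded_random_variable ?M x a b
  proof unfold_locales
    show "AE y in ?M. x y \<in> {a..b}" using bnd fin ne by (auto simp: AE_measure_pmf_iff)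
  qed simp
  have E: "measure_pmf.expectation (pmf_of_set A) x = (\<Sum>j\<in>A. x j) / card A"
    using fin ne by (simp add: integral_pmf_of_set)
  have "nn_integral ?M (\<lambda>y. exp (l * (x y - (\<Sum>j\<in>A. x j) / card A))) \<le> ennreal (exp (l\<^sup>2 * (b - a)\<^sup>2 / 8))"
    using Hoeffdings_lemma_nn_integral[OF l] unfolding E .
  moreover have "nn_integral ?M (\<lambda>y. exp (l * (x y - (\<Sum>j\<in>A. x j) / card A)))
     = ennreal ((\<Sum>i\<in>A. exp (l * (x i - (\<Sum>j\<in>A. x j) / card A))) / card A)"
    using fin ne by (simp add: nn_integral_pmf_of_set ennreal_of_nat_eq_real_of_nat
         divide_ennreal sum_nonneg card_gt_0_iff)
  ultimately show ?thesis by (simp add: ennreal_le_iff2)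
qed

lemma hoeff_real:
  fixes x :: "'a \<Rightarrow> real"
  assumes fin: "finite A" and ne: "A \<noteq> {}" and bnd: "\<And>i. i \<in> A \<Longrightarrow> a \<le> x i \<and> x i \<le> b"
  shows "(\<Sum>i\<in>A. exp (l * (x i - (\<Sum>j\<in>A. x j) / card A))) / card A \<le> exp (l\<^sup>2 * (b - a)\<^sup>2 / 8)"
proof -
  consider "l > 0" | "l = 0" | "l < 0" by linarith
  then show ?thesis
  proof cases
    case 1 show ?thesis by (rule hoeff_pos[OF fin ne bnd 1])
  next
    case 2 then show ?thesis using fin ne by simp
  next
    case 3
    have "(\<Sum>i\<in>A. exp ((-l) * ((-x i) - (\<Sum>j\<in>A. - x j) / card A))) / card A \<le> exp ((-l)\<^sup>2 * ((-a) - (-b))\<^sup>2 / 8)"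
      by (rule hoeff_pos[OF fin ne]) (use bnd 3 in auto)
    moreover have "(\<Sum>j\<in>A. - x j) = - (\<Sum>j\<in>A. x j)" by (simp add: sum_negf)
    ultimately show ?thesis by (simp add: algebra_simps power2_eq_square)
  qed
qed



lemma double_count:
  fixes g :: "'a set \<Rightarrow> real"
  assumes fin: "finite A"
  shows "real (Suc m) * (\<Sum>S\<in>{S. S \<subseteq> A \<and> card S = Suc m}. g S)
       = (\<Sum>j\<in>A. \<Sum>S\<in>{S. S \<subseteq> A - {j} \<and> card S = m}. g (insert j S))"
proof -
  let ?Subs = "{S. S \<subseteq> A \<and> card S = Suc m}"
  let ?P = "Sigma A (\<lambda>j. {S. S \<subseteq> A - {j} \<and> card S = m})"
  let ?Q = "Sigma ?Subs (\<lambda>T. T)"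
  have finP: "\<And>j. finite {S. S \<subseteq> A - {j} \<and> card S = m}"
    by (rule finite_subset[of _ "Pow A"]) (auto simp: fin)
  have finS: "finite ?Subs" by (rule finite_subset[of _ "Pow A"]) (auto simp: fin)
  have "(\<Sum>j\<in>A. \<Sum>S\<in>{S. S \<subseteq> A - {j} \<and> card S = m}. g (insert j S))
      = (\<Sum>p\<in>?P. g (insert (fst p) (snd p)))"
    using fin finP by (subst sum.Sigma) (auto simp: split_beta)
  also have "\<dots> = (\<Sum>q\<in>?Q. g (fst q))"
  proof (rule sum.reindex_bij_witness[where i = "\<lambda>q. (snd q, fst q - {snd q})" and j = "\<lambda>p. (insert (fst p) (snd p), fst p)"])
    fix p assume p: "p \<in> ?P"
    then obtain j S where pj: "p = (j, S)" and j: "j \<in> A" and S: "S \<subseteq> A - {j}" "card S = m" by auto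
    have "finite S" using S fin finite_subset by blast
    then show "(snd (insert (fst p) (snd p), fst p), fst (insert (fst p) (snd p), fst p) - {snd (insert (fst p) (snd p), fst p)}) = p"
      using pj S by auto
    have "j \<notin> S" using S by auto
    then show "(insert (fst p) (snd p), fst p) \<in> ?Q" using pj j S \<open>finite S\<close> by auto
    show "g (fst (insert (fst p) (snd p), fst p)) = g (insert (fst p) (snd p))" by simp
  next
    fix q assume q: "q \<in> ?Q"
    then obtain T j where qj: "q = (T, j)" and T: "T \<subseteq> A" "card T = Suc m" and j: "j \<in> T" by auto
    have "finite T" using T fin finite_subset by blast
    show "(insert (fst (snd q, fst q - {snd q})) (snd (snd q, fst q - {snd q})), fst (snd q, fst q - {snd q})) = q"
      using qj j by auto
    show "(snd q, fst q - {snd q}) \<in> ?P" using qj j T \<open>finite T\<close> by auto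
  qed
  also have "\<dots> = (\<Sum>T\<in>?Subs. \<Sum>j\<in>T. g T)"
    using finS fin by (subst sum.Sigma) (auto simp: split_beta intro: finite_subset)
  also have "\<dots> = (\<Sum>T\<in>?Subs. real (Suc m) * g T)"
    by (intro sum.cong) auto
  finally show ?thesis by (simp add: sum_distrib_left)
qed

lemma wor_hoeff:
  fixes x :: "'a \<Rightarrow> real"
  shows "\<forall>A. finite A \<longrightarrow> m \<le> card A \<longrightarrow> (\<forall>i\<in>A. a \<le> x i \<and> x i \<le> b) \<longrightarrow>
     (\<Sum>S\<in>{S. S \<subseteq> A \<and> card S = m}. exp (l * (\<Sum>i\<in>S. x i - (\<Sum>j\<in>A. x j) / card A)))
       \<le> real (card A choose m) * exp (real m * l\<^sup>2 * (b - a)\<^sup>2 / 8)"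
proof (induction m)
  case 0
  have "{S. S \<subseteq> A \<and> card S = 0} = {{}}" if "finite A" for A :: "'a set"
    using that by (auto dest: finite_subset[of _ A] simp: card_eq_0_iff)
  then show ?case by auto
next
  case (Suc m)
  show ?case
  proof (intro allI impI)
    fix A :: "'a set"
    assume fin: "finite A" and mN: "Suc m \<le> card A" and bnd: "\<forall>i\<in>A. a \<le> x i \<and> x i \<le> b"
    define N where "N = card A"
    define \<mu> where "\<mu> = (\<Sum>j\<in>A. x j) / card A"
    define \<mu>j where "\<mu>j = (\<lambda>j. (\<Sum>i\<in>A - {j}. x i) / card (A - {j}))"
    define c where "c = 1 - real m / (real N - 1)"
    define H where "H = exp (real m * l\<^sup>2 * (b - a)\<^sup>2 / 8)"
    define G where "G = exp (l\<^sup>2 * (b - a)\<^sup>2 / 8)"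
    have Npos: "N \<ge> 1" using mN N_def by simp
    have ne: "A \<noteq> {}" using Npos N_def by auto
    have cardj: "\<And>j. j \<in> A \<Longrightarrow> card (A - {j}) = N - 1" using fin N_def by simp
    have c01: "0 \<le> c" "c \<le> 1"
    proof -
      have "real N - 1 \<ge> 0" using Npos by simp
      then show "c \<le> 1" unfolding c_def by (simp add: divide_nonneg_nonneg)
      show "0 \<le> c"
      proof (cases "m = 0")
        case True then show ?thesis by (simp add: c_def)
      next
        case False
        then have "real N - 1 > 0" using mN N_def by simp
        moreover have "real m \<le> real N - 1" using mN N_def by simp
        ultimately show ?thesis unfolding c_def by (simp add: field_simps)
      qed
    qed
    have key: "(\<Sum>i\<in>insert j S. x i - \<mu>) = c * (x j - \<mu>) + (\<Sum>i\<in>S. x i - \<mu>j j)"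
      if j: "j \<in> A" and S: "S \<subseteq> A - {j}" "card S = m" for j S
    proof -
      have finS: "finite S" using S fin finite_subset by blast
      have jS: "j \<notin> S" using S by auto
      have "(\<Sum>i\<in>insert j S. x i - \<mu>) = (x j - \<mu>) + (\<Sum>i\<in>S. x i - \<mu>)"
        using finS jS by simp
      also have "(\<Sum>i\<in>S. x i - \<mu>) = (\<Sum>i\<in>S. x i - \<mu>j j) + real m * (\<mu>j j - \<mu>)"
        using S by (simp add: sum_subtractf algebra_simps)
      also have "real m * (\<mu>j j - \<mu>) = - (real m / (real N - 1)) * (x j - \<mu>)"
      proof (cases "m = 0")
        case True then show ?thesis by simp
      next
        case False
        then have N1: "real N - 1 > 0" using mN N_def by simp
        have sA: "(\<Sum>i\<in>A - {j}. x i) = (\<Sum>i\<in>A. x i) - x j"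
          using fin j by (simp add: sum_diff1)
        have "\<mu>j j = ((\<Sum>i\<in>A. x i) - x j) / (real N - 1)"
          unfolding \<mu>j_def using sA cardj[OF j] Npos by (simp add: of_nat_diff)
        moreover have "\<mu> = (\<Sum>i\<in>A. x i) / real N" unfolding \<mu>_def N_def by simp
        ultimately have e: "x j + real N * \<mu>j j - \<mu>j j - \<mu> * real N = 0"
          using N1 Npos by (simp add: field_simps)
        have e2: "real m * x j + real N * (real m * \<mu>j j) - real m * \<mu>j j - \<mu> * (real N * real m) = 0"
          using arg_cong[OF e, of "(*) (real m)"] by (simp add: algebra_simps)
        show ?thesis using N1 e2 by (simp add: field_simps)
      qed
      finally show ?thesis unfolding c_def by (simp add: algebra_simps)
    qed
    have inner: "(\<Sum>S\<in>{S. S \<subseteq> A - {j} \<and> card S = m}. exp (l * (\<Sum>i\<in>insert j S. x i - \<mu>)))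
        \<le> exp (l * c * (x j - \<mu>)) * (real (N - 1 choose m) * H)" if j: "j \<in> A" for j
    proof -
      have "(\<Sum>S\<in>{S. S \<subseteq> A - {j} \<and> card S = m}. exp (l * (\<Sum>i\<in>insert j S. x i - \<mu>)))
          = (\<Sum>S\<in>{S. S \<subseteq> A - {j} \<and> card S = m}. exp (l * c * (x j - \<mu>)) * exp (l * (\<Sum>i\<in>S. x i - \<mu>j j)))"
        by (intro sum.cong refl) (use key j in \<open>simp add: distrib_left mult.assoc exp_add\<close>)
      also have "\<dots> = exp (l * c * (x j - \<mu>)) * (\<Sum>S\<in>{S. S \<subseteq> A - {j} \<and> card S = m}. exp (l * (\<Sum>i\<in>S. x i - \<mu>j j)))"
        by (simp add: sum_distrib_left)
      also have "\<dots> \<le> exp (l * c * (x j - \<mu>)) * (real (N - 1 choose m) * H)"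
      proof (rule mult_left_mono)
        have "finite (A - {j})" using fin by simp
        moreover have "m \<le> card (A - {j})" using cardj[OF j] mN N_def by simp
        moreover have "\<forall>i\<in>A - {j}. a \<le> x i \<and> x i \<le> b" using bnd by auto
        ultimately have "(\<Sum>S\<in>{S. S \<subseteq> A - {j} \<and> card S = m}. exp (l * (\<Sum>i\<in>S. x i - (\<Sum>i\<in>A - {j}. x i) / card (A - {j}))))
             \<le> real (card (A - {j}) choose m) * exp (real m * l\<^sup>2 * (b - a)\<^sup>2 / 8)"
          using Suc.IH by blast
        then show "(\<Sum>S\<in>{S. S \<subseteq> A - {j} \<and> card S = m}. exp (l * (\<Sum>i\<in>S. x i - \<mu>j j))) \<le> real (N - 1 choose m) * H"
          unfolding \<mu>j_def H_def cardj[OF j] by simp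
      qed simp
      finally show ?thesis .
    qed
    have hsum: "(\<Sum>j\<in>A. exp ((l * c) * (x j - \<mu>))) \<le> real N * G"
    proof -
      have "(\<Sum>j\<in>A. exp ((l * c) * (x j - \<mu>))) / card A \<le> exp ((l * c)\<^sup>2 * (b - a)\<^sup>2 / 8)"
        unfolding \<mu>_def by (rule hoeff_real[OF fin ne]) (use bnd in auto)
      also have "\<dots> \<le> G" unfolding G_def
      proof -
        have "c\<^sup>2 \<le> 1" using c01 by (simp add: power_le_one)
        then have "(l * c)\<^sup>2 * (b - a)\<^sup>2 \<le> l\<^sup>2 * (b - a)\<^sup>2"
        proof -
          assume h: "c\<^sup>2 \<le> 1"
          have "c\<^sup>2 * (b - a)\<^sup>2 \<le> 1 * (b - a)\<^sup>2" by (rule mult_right_mono[OF h]) simp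
          then have "l\<^sup>2 * (c\<^sup>2 * (b - a)\<^sup>2) \<le> l\<^sup>2 * (b - a)\<^sup>2" by (intro mult_left_mono) auto
          then show ?thesis by (simp add: power_mult_distrib mult.assoc)
        qed
        then show "exp ((l * c)\<^sup>2 * (b - a)\<^sup>2 / 8) \<le> exp (l\<^sup>2 * (b - a)\<^sup>2 / 8)" by simp
      qed
      finally show ?thesis using Npos N_def by (simp add: field_simps)
    qed
    have "real (Suc m) * (\<Sum>S\<in>{S. S \<subseteq> A \<and> card S = Suc m}. exp (l * (\<Sum>i\<in>S. x i - \<mu>)))
        = (\<Sum>j\<in>A. \<Sum>S\<in>{S. S \<subseteq> A - {j} \<and> card S = m}. exp (l * (\<Sum>i\<in>insert j S. x i - \<mu>)))"
      by (rule double_count[OF fin])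
    also have "\<dots> \<le> (\<Sum>j\<in>A. exp (l * c * (x j - \<mu>)) * (real (N - 1 choose m) * H))"
      by (intro sum_mono inner)
    also have "\<dots> = (\<Sum>j\<in>A. exp ((l * c) * (x j - \<mu>))) * (real (N - 1 choose m) * H)"
      by (simp add: sum_distrib_right)
    also have "\<dots> \<le> real N * G * (real (N - 1 choose m) * H)"
      by (rule mult_right_mono[OF hsum]) (simp add: H_def)
    also have "real N * real (N - 1 choose m) = real (Suc m) * real (N choose Suc m)"
    proof -
      obtain n where n: "N = Suc n" using Npos by (cases N) auto
      have "real (Suc m * (Suc n choose Suc m)) = real (Suc n * (n choose m))"
        by (simp only: Suc_times_binomial)
      then show ?thesis by (simp only: n diff_Suc_1 of_nat_mult)
    qed
    then have "real N * G * (real (N - 1 choose m) * H) = real (Suc m) * (real (N choose Suc m) * (G * H))"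
      by (simp add: algebra_simps)
    finally have "(\<Sum>S\<in>{S. S \<subseteq> A \<and> card S = Suc m}. exp (l * (\<Sum>i\<in>S. x i - \<mu>))) \<le> real (N choose Suc m) * (G * H)"
      by (simp del: of_nat_Suc)
    moreover have "G * H = exp (real (Suc m) * l\<^sup>2 * (b - a)\<^sup>2 / 8)"
      unfolding G_def H_def by (simp add: exp_add[symmetric] field_simps)
    ultimately show "(\<Sum>S\<in>{S. S \<subseteq> A \<and> card S = Suc m}. exp (l * (\<Sum>i\<in>S. x i - (\<Sum>j\<in>A. x j) / card A)))
       \<le> real (card A choose Suc m) * exp (real (Suc m) * l\<^sup>2 * (b - a)\<^sup>2 / 8)"
      unfolding \<mu>_def N_def by simp
  qed
qed
lemma sym_inner:
  fixes K :: "real^'n^'n"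
  assumes "transpose K = K"
  shows "u \<bullet> (K *v w) = (K *v u) \<bullet> w"
proof -
  have "u v* K = K *v u" by (metis vector_transpose_matrix assms)
  then show ?thesis by (metis dot_lmul_matrix)
qed

lemma psd_cs:
  fixes K :: "real^'n^'n"
  assumes "spsd K"
  shows "(x \<bullet> (K *v y))\<^sup>2 \<le> (x \<bullet> (K *v x)) * (y \<bullet> (K *v y))"
proof -
  have T: "transpose K = K" and P: "\<And>z. 0 \<le> z \<bullet> (K *v z)" using assms unfolding spsd_def by auto
  define p where "p = x \<bullet> (K *v x)"
  define q where "q = y \<bullet> (K *v y)"
  define r where "r = x \<bullet> (K *v y)"
  have yx: "y \<bullet> (K *v x) = r" unfolding r_def using sym_inner[OF T, of y x] by (simp add: inner_commute)
  have quad: "0 \<le> p + 2 * t * r + t\<^sup>2 * q" for t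
  proof -
    have "0 \<le> (x + t *\<^sub>R y) \<bullet> (K *v (x + t *\<^sub>R y))" by (rule P)
    also have "\<dots> = p + 2 * t * r + t\<^sup>2 * q"
      by (simp add: matrix_vector_right_distrib matrix_vector_mult_scaleR inner_add_left inner_add_right
          p_def q_def r_def[symmetric] yx power2_eq_square algebra_simps)
    finally show ?thesis .
  qed
  have q0: "q \<ge> 0" unfolding q_def by (rule P)
  show ?thesis
  proof (cases "q = 0")
    case True
    have "r = 0"
    proof (rule ccontr)
      assume "r \<noteq> 0"
      have "0 \<le> p + 2 * (- (p + 1) / (2 * r)) * r + (- (p + 1) / (2 * r))\<^sup>2 * q" by (rule quad)
      also have "\<dots> = -1" using \<open>r \<noteq> 0\<close> True by (simp add: field_simps)
      finally show False by simp
    qed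
    then show ?thesis using True by (simp add: r_def[symmetric] p_def[symmetric] q_def[symmetric])
  next
    case False
    then have qp: "q > 0" using q0 by simp
    have "0 \<le> p + 2 * (- r / q) * r + (- r / q)\<^sup>2 * q" by (rule quad)
    also have "\<dots> = (p * q - r\<^sup>2) / q" using qp by (simp add: field_simps power2_eq_square)
    finally have "0 \<le> p * q - r\<^sup>2" using qp by (simp add: divide_nonneg_pos zero_le_divide_iff)
    then show ?thesis by (simp add: r_def[symmetric] p_def[symmetric] q_def[symmetric])
  qed
qed

lemma inner_ind_vec:
  fixes v :: "real^'n"
  shows "v \<bullet> ind_vec A k = (\<Sum>i\<in>A. v $ i) / real k"
proof -
  have "v \<bullet> ind_vec A k = (\<Sum>i\<in>UNIV. (if i \<in> A then v $ i / real k else 0))"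
    unfolding inner_vec_def ind_vec_def by (intro sum.cong) auto
  also have "\<dots> = (\<Sum>i\<in>UNIV \<inter> A. v $ i / real k)"
    by (rule sum.inter_restrict[symmetric]) simp
  finally show ?thesis by (simp add: sum_divide_distrib)
qed

theorem propositionB1:
  fixes K :: "real^'n^'n" and Xin :: "'n set" and nout :: nat
  assumes "spsd K"
    and "K \<noteq> 0"
    and "1 \<le> nout" and "nout \<le> card Xin"
  shows "sub_gaussian_thinning K (sqrt (max_norm K) / sqrt (real nout)) 0 Xin nout
           (uniform_subsampling Xin nout)"
proof -
  define m where "m = nout"
  define N where "N = card Xin"
  define Subs where "Subs = {S. S \<subseteq> Xin \<and> card S = nout}"
  define M where "M = max_norm K"
  have T: "transpose K = K" using assms(1) unfolding spsd_def by auto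
  have finX: "finite Xin" using assms(3,4) card.infinite by fastforce
  have mpos: "real nout > 0" using assms(3) by simp
  have cardS: "card Subs = N choose nout" unfolding Subs_def N_def by (rule n_subsets[OF finX])
  have Cpos: "N choose nout > 0" using assms(4) N_def by simp
  have finS: "finite Subs" using Cpos cardS card.infinite by fastforce
  have neS: "Subs \<noteq> {}" using Cpos cardS by auto
  have finE: "finite {\<bar>K $ i $ j\<bar> | i j. True}"
  proof -
    have "{\<bar>K $ i $ j\<bar> | i j. True} = (\<lambda>(i, j). \<bar>K $ i $ j\<bar>) ` UNIV" by auto
    then show ?thesis by simp
  qed
  have Mge: "\<bar>K $ i $ j\<bar> \<le> M" for i j
    unfolding M_def max_norm_def by (rule Max_ge[OF finE]) auto
  have Mpos: "M > 0"
  proof -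
    obtain i j where "K $ i $ j \<noteq> 0" using assms(2) by (metis vec_eq_iff zero_index)
    then show ?thesis using Mge[of i j] by simp
  qed
  have main: "measure_pmf.expectation (pmf_of_set Subs)
        (\<lambda>S. exp (u \<bullet> (K *v (ind_vec Xin (card Xin) - ind_vec S nout))) * indicator UNIV S)
      \<le> exp ((sqrt M / sqrt (real nout))\<^sup>2 / 2 * (u \<bullet> (K *v u)))" for u
  proof -
    define v where "v = K *v u"
    define q where "q = u \<bullet> (K *v u)"
    define c where "c = sqrt (M * q)"
    define \<mu> where "\<mu> = (\<Sum>j\<in>Xin. v $ j) / card Xin"
    have q0: "q \<ge> 0" using assms(1) unfolding spsd_def q_def by auto
    have vb: "- c \<le> v $ i \<and> v $ i \<le> c" for i
    proof -
      have "v $ i = axis i 1 \<bullet> (K *v u)" unfolding v_def by (simp add: inner_axis')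
      moreover have "axis i 1 \<bullet> (K *v axis i 1) = K $ i $ i"
        by (simp add: inner_axis' matrix_vector_mult_basis column_def)
      ultimately have "(v $ i)\<^sup>2 \<le> K $ i $ i * q"
        using psd_cs[OF assms(1), of "axis i 1" u] unfolding q_def by simp
      also have "\<dots> \<le> M * q" using Mge[of i i] q0 by (intro mult_right_mono) auto
      finally have "sqrt ((v $ i)\<^sup>2) \<le> c" unfolding c_def by (rule real_sqrt_le_mono)
      then show ?thesis by (simp add: abs_le_iff)
    qed
    have eq: "u \<bullet> (K *v (ind_vec Xin (card Xin) - ind_vec S nout)) = (- 1 / real nout) * (\<Sum>i\<in>S. v $ i - \<mu>)"
      if S: "S \<in> Subs" for S
    proof -
      have cS: "card S = nout" using S unfolding Subs_def by auto
      have "u \<bullet> (K *v (ind_vec Xin (card Xin) - ind_vec S nout)) = v \<bullet> (ind_vec Xin (card Xin) - ind_vec S nout)"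
        unfolding v_def by (rule sym_inner[OF T])
      also have "\<dots> = \<mu> - (\<Sum>i\<in>S. v $ i) / real nout"
        by (simp add: inner_diff_right inner_ind_vec \<mu>_def)
      also have "\<dots> = (- 1 / real nout) * (\<Sum>i\<in>S. v $ i - \<mu>)"
        using mpos cS by (simp add: sum_subtractf field_simps)
      finally show ?thesis .
    qed
    have bound: "(\<Sum>S\<in>Subs. exp ((- 1 / real nout) * (\<Sum>i\<in>S. v $ i - \<mu>)))
       \<le> real (N choose nout) * exp (real nout * (- 1 / real nout)\<^sup>2 * (c - - c)\<^sup>2 / 8)"
      using wor_hoeff[where m=nout and x="\<lambda>i. v $ i" and a="- c" and b=c and l="- 1 / real nout"] finX assms(4) vb
      unfolding Subs_def N_def \<mu>_def by blast
    have ex: "real nout * (- 1 / real nout)\<^sup>2 * (c - - c)\<^sup>2 / 8 = (sqrt M / sqrt (real nout))\<^sup>2 / 2 * q"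
      using mpos Mpos q0 unfolding c_def by (simp add: power2_eq_square field_simps real_sqrt_mult)
    have "measure_pmf.expectation (pmf_of_set Subs)
        (\<lambda>S. exp (u \<bullet> (K *v (ind_vec Xin (card Xin) - ind_vec S nout))) * indicator UNIV S)
        = (\<Sum>S\<in>Subs. exp ((- 1 / real nout) * (\<Sum>i\<in>S. v $ i - \<mu>))) / real (N choose nout)"
      using finS neS cardS eq by (simp add: integral_pmf_of_set)
    also have "\<dots> \<le> exp ((sqrt M / sqrt (real nout))\<^sup>2 / 2 * q)"
      using bound Cpos ex by (simp add: divide_le_eq mult.commute)
    finally show ?thesis unfolding q_def .
  qed
  show ?thesis
    unfolding sub_gaussian_thinning_def uniform_subsampling_def Subs_def[symmetric] M_def[symmetric]
  proof (intro conjI exI[of _ UNIV] allI)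
    show "spsd K" by (rule assms(1))
    show "0 < sqrt M / sqrt (real nout)" using Mpos mpos by simp
  qed (use main in \<open>auto simp: measure_pmf.prob_space\<close>)
qed

end
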